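(* For nonnegative integers $n_1,n_2,a,b$ and $n=n_1+n_2$, \begin{multline*} \sum_{i,j\ge0} q^{(n_1-a)i+(n_2-b)j-ij+i^2+j^2} \begin{bmatrix} n_1\\ a-i\end{bmatrix}_q\begin{bmatrix} n_2\\ b-j\end{bmatrix}_q \begin{bmatrix} n_1+n_2\\ n_1+i-j\end{bmatrix}_q \begin{bmatrix} n_1+i\\ n_1\end{bmatrix}_q \begin{bmatrix} n_2+j\\ n_2\end{bmatrix}_q\\ = \begin{bmatrix} n\\ n_1\end{bmatrix}_q\sum_{i\ge0} q^{(n-a-b)i + i^2} \begin{bmatrix} n+i\\ i\end{bmatrix}_q \begin{bmatrix} n\\ a-i\end{bmatrix}_q \begin{bmatrix} n\\ b-i\end{bmatrix}_q. \end{multline*}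
   Context: $[m]_q=1+\dots+q^{m-1}$, $[m]_q!=[1]_q\cdots[m]_q$, and $\begin{bmatrix} m\\ j\end{bmatrix}_q=\frac{[m]_q!}{[j]_q![m-j]_q!}$ for $0\le j\le m$, and $0$ otherwise. Sums are over integers. *)

theory Defs
  imports Main
begin

definition qint :: "'a::field \<Rightarrow> nat \<Rightarrow> 'a" where
  "qint q m = (\<Sum>k<m. q ^ k)"

definition qfact :: "'a::field \<Rightarrow> nat \<Rightarrow> 'a" where
  "qfact q m = (\<Prod>k\<in>{1..m}. qint q k)"

definition qbinom :: "'a::field \<Rightarrow> int \<Rightarrow> int \<Rightarrow> 'a" where
  "qbinom q m j = (if 0 \<le> j \<and> j \<le> m
     then qfact q (nat m) / (qfact q (nat j) * qfact q (nat (m - j))) else 0)"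

end

theory Submission
  imports Defs
begin


lemma qint_add: "qint q (K + L) = qint q K + q ^ K * qint q L"
  by (induction L) (auto simp: qint_def algebra_simps power_add)

lemma qfact_Suc: "qfact q (Suc m) = qfact q m * qint q (Suc m)"
  unfolding qfact_def by (simp add: prod.nat_ivl_Suc')

lemma qfact_0[simp]: "qfact q 0 = 1" unfolding qfact_def by simp

lemma qfact_nz:
  assumes "\<forall>m\<ge>1. qint q m \<noteq> 0" shows "qfact q m \<noteq> 0"
  using assms unfolding qfact_def by (auto simp: prod_zero_iff)

lemma qb_nat: "qbinom q (int M) (int K) = (if K \<le> M then qfact q M / (qfact q K * qfact q (M - K)) else 0)"
  unfolding qbinom_def by (auto simp: nat_diff_distrib)

lemma qb_neg: "k < 0 \<Longrightarrow> qbinom q m k = 0" unfolding qbinom_def by simp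
lemma qb_big: "m < k \<Longrightarrow> qbinom q m k = 0" unfolding qbinom_def by simp

lemma pascal_nat:
  assumes nz: "\<forall>m\<ge>1. qint q m \<noteq> 0" and "K \<le> M"
  shows "qbinom q (int (Suc M)) (int (Suc K)) = qbinom q (int M) (int K) + q^(Suc K) * qbinom q (int M) (int (Suc K))"
proof (cases "K = M")
  case True
  then show ?thesis using qfact_nz[OF nz] by (simp only: qb_nat) simp
next
  case False
  hence KM: "K < M" using assms by simp
  have f1: "qfact q (Suc K) = qfact q K * qint q (Suc K)" by (rule qfact_Suc)
  have e: "M - K = Suc (M - Suc K)" using KM by simp
  have f2: "qfact q (M - K) = qfact q (M - Suc K) * qint q (M - K)" unfolding e by (rule qfact_Suc)
  have f3: "qfact q (Suc M) = qfact q M * qint q (Suc M)" by (rule qfact_Suc)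
  have e2: "Suc M = Suc K + (M - K)" using KM by simp
  have f4: "qint q (Suc M) = qint q (Suc K) + q^(Suc K) * qint q (M - K)"
    by (subst e2, rule qint_add)
  have n1: "qint q (Suc K) \<noteq> 0" "qint q (M - K) \<noteq> 0" using nz KM by auto
  have n2: "qfact q K \<noteq> 0" "qfact q (M - Suc K) \<noteq> 0" using qfact_nz[OF nz] by auto
  have "Suc M - Suc K = M - K" by simp
  show ?thesis using KM
    apply (simp only: qb_nat)
    apply (simp add: f1 f2 f3 f4 del: of_nat_Suc)
    using n1 n2 by (simp add: field_simps)
qed

lemma pascal:
  assumes nz: "\<forall>m\<ge>1. qint q m \<noteq> 0" and m0: "0 \<le> m"
  shows "qbinom q (m + 1) k = qbinom q m (k - 1) + q powi k * qbinom q m k"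
proof -
  obtain M where M: "m = int M" using m0 nonneg_eq_int by blast
  consider "k < 0" | "k = 0" | K where "k = int (Suc K)"
  proof -
    have "k < 0 \<or> k = 0 \<or> (\<exists>K. k = int (Suc K))"
    proof (cases "k \<le> 0")
      case False
      hence "k = int (Suc (nat (k - 1)))" by simp
      thus ?thesis by blast
    qed auto
    thus "(k < 0 \<Longrightarrow> thesis) \<Longrightarrow> (k = 0 \<Longrightarrow> thesis) \<Longrightarrow> (\<And>K. k = int (Suc K) \<Longrightarrow> thesis) \<Longrightarrow> thesis" by blast
  qed
  then show ?thesis
  proof cases
    case 1 then show ?thesis by (simp add: qb_neg)
  next
    case 2 then show ?thesis using m0 qfact_nz[OF nz] by (simp add: qbinom_def)
  next
    case 3
    show ?thesis
    proof (cases "K \<le> M")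
      case True
      have "qbinom q (int (Suc M)) (int (Suc K)) = qbinom q (int M) (int K) + q^(Suc K) * qbinom q (int M) (int (Suc K))"
        by (rule pascal_nat[OF nz True])
      moreover have e1: "m + 1 = int (Suc M)" using M by simp
      moreover have e2: "k - 1 = int K" using 3 by simp
      ultimately show ?thesis unfolding 3 M power_int_of_nat by (simp add: add.commute)
    next
      case False
      then show ?thesis using 3 M by (simp add: qb_big)
    qed
  qed
qed

lemma VB:
  fixes q :: "'a::field"
  assumes nz: "\<forall>m\<ge>1. qint q m \<noteq> 0" and q0: "q \<noteq> 0"
  shows "\<forall>M R S. 0 \<le> M \<longrightarrow> finite S \<longrightarrow> {0..R} \<subseteq> S \<longrightarrow>
     qbinom q (M + int p) R = (\<Sum>s\<in>S. q powi ((R - s) * (int p - s)) * qbinom q M (R - s) * qbinom q (int p) s)"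
proof (induction p)
  case 0
  show ?case
  proof (intro allI impI)
    fix M R :: int and S :: "int set"
    assume M0: "0 \<le> M" and fS: "finite S" and sub: "{0..R} \<subseteq> S"
    have "(\<Sum>s\<in>S. q powi ((R - s) * (int 0 - s)) * qbinom q M (R - s) * qbinom q (int 0) s)
        = (\<Sum>s\<in>S. if s = 0 then qbinom q M R else 0)"
      by (rule sum.cong) (auto simp: qbinom_def)
    also have "\<dots> = qbinom q M R"
    proof -
      have "R < 0 \<or> 0 \<in> S" using sub by (cases "R < 0") auto
      thus ?thesis using fS by (auto simp: qb_neg)
    qed
    finally show "qbinom q (M + int 0) R = (\<Sum>s\<in>S. q powi ((R - s) * (int 0 - s)) * qbinom q M (R - s) * qbinom q (int 0) s)"
      by simp
  qed
next
  case (Suc p)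
  show ?case
  proof (intro allI impI)
    fix M R :: int and S :: "int set"
    assume M0: "0 \<le> M" and fS: "finite S" and sub: "{0..R} \<subseteq> S"
    let ?S1 = "(\<lambda>s. s - 1) ` S"
    have sub1: "{0..R-1} \<subseteq> ?S1"
    proof
      fix x assume "x \<in> {0..R-1}"
      hence "x + 1 \<in> S" using sub by auto
      thus "x \<in> ?S1" by (auto intro: image_eqI[where x = "x+1"])
    qed
    have inj: "inj_on (\<lambda>s::int. s - 1) S" by (auto simp: inj_on_def)
    have "qbinom q (M + int (Suc p)) R = qbinom q ((M + int p) + 1) R" by (simp add: ac_simps)
    also have "\<dots> = qbinom q (M + int p) (R - 1) + q powi R * qbinom q (M + int p) R"
      by (rule pascal[OF nz]) (use M0 in simp)
    also have "qbinom q (M + int p) (R - 1) = (\<Sum>t\<in>?S1. q powi ((R - 1 - t) * (int p - t)) * qbinom q M (R - 1 - t) * qbinom q (int p) t)"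
      using Suc.IH M0 fS sub1 by blast
    also have "\<dots> = (\<Sum>s\<in>S. q powi ((R - s) * (int p + 1 - s)) * qbinom q M (R - s) * qbinom q (int p) (s - 1))"
      by (subst sum.reindex[OF inj]) (simp add: algebra_simps)
    also have "qbinom q (M + int p) R = (\<Sum>s\<in>S. q powi ((R - s) * (int p - s)) * qbinom q M (R - s) * qbinom q (int p) s)"
      using Suc.IH M0 fS sub by blast
    finally have 1: "qbinom q (M + int (Suc p)) R = (\<Sum>s\<in>S. q powi ((R - s) * (int p + 1 - s)) * qbinom q M (R - s) * qbinom q (int p) (s - 1))
       + (\<Sum>s\<in>S. q powi R * (q powi ((R - s) * (int p - s)) * qbinom q M (R - s) * qbinom q (int p) s))"
      by (simp add: sum_distrib_left)
    have 2: "q powi ((R - s) * (int p + 1 - s)) * q powi s = q powi R * q powi ((R - s) * (int p - s))" for s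
    proof -
      have "q powi ((R - s) * (int p + 1 - s)) * q powi s = q powi ((R - s) * (int p + 1 - s) + s)"
        by (simp add: power_int_add q0)
      also have "(R - s) * (int p + 1 - s) + s = R + (R - s) * (int p - s)" by (simp add: algebra_simps)
      also have "q powi \<dots> = q powi R * q powi ((R - s) * (int p - s))" by (simp add: power_int_add q0)
      finally show ?thesis .
    qed
    have "(\<Sum>s\<in>S. q powi ((R - s) * (int (Suc p) - s)) * qbinom q M (R - s) * qbinom q (int (Suc p)) s)
       = (\<Sum>s\<in>S. q powi ((R - s) * (int p + 1 - s)) * qbinom q M (R - s) * qbinom q (int p) (s - 1)
            + q powi R * (q powi ((R - s) * (int p - s)) * qbinom q M (R - s) * qbinom q (int p) s))"
    proof (rule sum.cong[OF refl])
      fix s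
      have "qbinom q (int (Suc p)) s = qbinom q (int p + 1) s" by (simp add: ac_simps)
      also have "\<dots> = qbinom q (int p) (s - 1) + q powi s * qbinom q (int p) s" by (rule pascal[OF nz]) simp
      finally have e: "qbinom q (int (Suc p)) s = qbinom q (int p) (s - 1) + q powi s * qbinom q (int p) s" .
      have "q powi ((R - s) * (int (Suc p) - s)) * qbinom q M (R - s) * qbinom q (int (Suc p)) s
          = q powi ((R - s) * (int p + 1 - s)) * qbinom q M (R - s) * qbinom q (int p) (s - 1)
            + (q powi ((R - s) * (int p + 1 - s)) * q powi s) * qbinom q M (R - s) * qbinom q (int p) s"
        unfolding e by (simp add: algebra_simps)
      also have "\<dots> = q powi ((R - s) * (int p + 1 - s)) * qbinom q M (R - s) * qbinom q (int p) (s - 1)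
            + q powi R * (q powi ((R - s) * (int p - s)) * qbinom q M (R - s) * qbinom q (int p) s)"
        unfolding 2 by (simp add: algebra_simps)
      finally show "q powi ((R - s) * (int (Suc p) - s)) * qbinom q M (R - s) * qbinom q (int (Suc p)) s = \<dots>" .
    qed
    then show "qbinom q (M + int (Suc p)) R = (\<Sum>s\<in>S. q powi ((R - s) * (int (Suc p) - s)) * qbinom q M (R - s) * qbinom q (int (Suc p)) s)"
      using 1 by (simp add: sum.distrib)
  qed
qed

lemma VA:
  fixes q :: "'a::field"
  assumes nz: "\<forall>m\<ge>1. qint q m \<noteq> 0" and q0: "q \<noteq> 0"
    and M0: "0 \<le> M" and P0: "0 \<le> P" and fS: "finite S" and sub: "{0..R} \<subseteq> S"
  shows "qbinom q (M + P) R = (\<Sum>s\<in>S. q powi (s * (M - R + s)) * qbinom q M (R - s) * qbinom q P s)"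
proof -
  obtain m where m: "M = int m" using M0 nonneg_eq_int by blast
  let ?S' = "(\<lambda>s. R - s) ` S"
  have sub': "{0..R} \<subseteq> ?S'"
  proof
    fix x assume "x \<in> {0..R}"
    hence "R - x \<in> S" using sub by auto
    thus "x \<in> ?S'" by (auto intro: image_eqI[where x = "R - x"])
  qed
  have inj: "inj_on (\<lambda>s::int. R - s) S" by (auto simp: inj_on_def)
  have "qbinom q (M + P) R = qbinom q (P + int m) R" using m by (simp add: ac_simps)
  also have "\<dots> = (\<Sum>t\<in>?S'. q powi ((R - t) * (int m - t)) * qbinom q P (R - t) * qbinom q (int m) t)"
    using VB[OF nz q0, rule_format, of P ?S' R m] P0 fS sub' by blast
  also have "\<dots> = (\<Sum>s\<in>S. q powi (s * (M - R + s)) * qbinom q M (R - s) * qbinom q P s)"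
    by (subst sum.reindex[OF inj]) (simp add: m algebra_simps)
  finally show ?thesis .
qed

lemma VAs:
  fixes q :: "'a::field"
  assumes nz: "\<forall>m\<ge>1. qint q m \<noteq> 0" and q0: "q \<noteq> 0"
    and M0: "0 \<le> M" and P0: "0 \<le> P" and fT: "finite T" and sub: "{k..R} \<subseteq> T"
  shows "qbinom q (M + P) (R - k) = (\<Sum>i\<in>T. q powi ((i - k) * (M - R + i)) * qbinom q M (R - i) * qbinom q P (i - k))"
proof -
  let ?S = "(\<lambda>i. i - k) ` T"
  have sub': "{0..R-k} \<subseteq> ?S"
  proof
    fix x assume "x \<in> {0..R-k}"
    hence "x + k \<in> T" using sub by auto
    thus "x \<in> ?S" by (auto intro: image_eqI[where x = "x + k"])
  qed
  have inj: "inj_on (\<lambda>i::int. i - k) T" by (auto simp: inj_on_def)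
  have "qbinom q (M + P) (R - k) = (\<Sum>s\<in>?S. q powi (s * (M - (R - k) + s)) * qbinom q M (R - k - s) * qbinom q P s)"
    by (rule VA[OF nz q0 M0 P0 _ sub']) (use fT in simp)
  also have "\<dots> = (\<Sum>i\<in>T. q powi ((i - k) * (M - R + i)) * qbinom q M (R - i) * qbinom q P (i - k))"
    by (subst sum.reindex[OF inj]) (simp add: algebra_simps)
  finally show ?thesis .
qed

lemma VBs:
  fixes q :: "'a::field"
  assumes nz: "\<forall>m\<ge>1. qint q m \<noteq> 0" and q0: "q \<noteq> 0"
    and M0: "0 \<le> M" and P0: "0 \<le> P" and fT: "finite T" and sub: "{k..R} \<subseteq> T"
  shows "qbinom q (M + P) (R - k) = (\<Sum>i\<in>T. q powi ((R - i) * (P - i + k)) * qbinom q M (R - i) * qbinom q P (i - k))"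
proof -
  obtain p where p: "P = int p" using P0 nonneg_eq_int by blast
  let ?S = "(\<lambda>i. i - k) ` T"
  have sub': "{0..R-k} \<subseteq> ?S"
  proof
    fix x assume "x \<in> {0..R-k}"
    hence "x + k \<in> T" using sub by auto
    thus "x \<in> ?S" by (auto intro: image_eqI[where x = "x + k"])
  qed
  have inj: "inj_on (\<lambda>i::int. i - k) T" by (auto simp: inj_on_def)
  have "qbinom q (M + P) (R - k) = (\<Sum>s\<in>?S. q powi ((R - k - s) * (int p - s)) * qbinom q M (R - k - s) * qbinom q (int p) s)"
    using VB[OF nz q0, rule_format, of M ?S "R - k" p] M0 fT sub' p by blast
  also have "\<dots> = (\<Sum>i\<in>T. q powi ((R - i) * (P - i + k)) * qbinom q M (R - i) * qbinom q P (i - k))"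
    by (subst sum.reindex[OF inj]) (simp add: p algebra_simps)
  finally show ?thesis .
qed

lemma qb_sym: "0 \<le> m \<Longrightarrow> qbinom q m k = qbinom q m (m - k)"
  unfolding qbinom_def by (auto simp: mult.commute)

lemma T1:
  fixes q :: "'a::field"
  assumes nz: "\<forall>m\<ge>1. qint q m \<noteq> 0" and N0: "0 \<le> N"
  shows "qbinom q N j * qbinom q j k = qbinom q N k * qbinom q (N - k) (j - k)"
proof -
  consider "k < 0" | "j < k" | "0 \<le> k" "k \<le> j" "N < j" | "0 \<le> k" "k \<le> j" "j \<le> N" by linarith
  then show ?thesis
  proof cases
    case 1 then show ?thesis by (simp add: qb_neg)
  next
    case 2 then show ?thesis by (simp add: qb_neg qb_big)
  next
    case 3 then show ?thesis by (cases "N < k") (simp_all add: qb_big)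
  next
    case 4
    obtain NN J K where e: "N = int NN" "j = int J" "k = int K"
      using 4 N0 by (metis nonneg_eq_int order_trans)
    have e2: "N - k = int (NN - K)" "j - k = int (J - K)" using 4 e by auto
    have le: "K \<le> J" "J \<le> NN" using 4 e by auto
    have "NN - K - (J - K) = NN - J" using le by simp
    then show ?thesis unfolding e2 unfolding e using le qfact_nz[OF nz]
      apply (simp only: qb_nat)
      by (simp add: field_simps)
  qed
qed



lemma Hlem:
  fixes q :: "'a::field"
  assumes nz: "\<forall>m\<ge>1. qint q m \<noteq> 0"
  shows "qbinom q (int n1 + int n2) (int n1 + int i - int j) * qbinom q (int n1 + int i) (int n1) * qbinom q (int n2 + int j) (int n2)
       = qbinom q (int n1 + int n2) (int n1) * qbinom q (int n1 + int i) (int j) * qbinom q (int n2 + int j) (int i)"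
proof -
  consider "n1 + i < j" | "n2 + j < i" | "j \<le> n1 + i" "i \<le> n2 + j" by linarith
  then show ?thesis
  proof cases
    case 1 then show ?thesis by (simp add: qb_neg qb_big)
  next
    case 2 then show ?thesis by (simp add: qb_neg qb_big)
  next
    case 3
    have e: "int n1 + int n2 = int (n1 + n2)" "int n1 + int i - int j = int (n1 + i - j)"
      "int n1 + int i = int (n1 + i)" "int n2 + int j = int (n2 + j)" "int (n1 + i) - int j = int (n1 + i - j)" using 3 by auto
    have d: "n1 + n2 - (n1 + i - j) = n2 + j - i" "n1 + i - n1 = i" "n2 + j - n2 = j" using 3 by auto
    show ?thesis unfolding e using 3 qfact_nz[OF nz]
      apply (simp only: qb_nat d)
      by (simp add: field_simps)
  qed
qed

lemma coreK:
  fixes q :: "'a::field"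
  assumes nz: "\<forall>m\<ge>1. qint q m \<noteq> 0" and q0: "q \<noteq> 0"
    and N10: "0 \<le> N1" and N20: "0 \<le> N2" and i0: "0 \<le> i" and j0: "0 \<le> j" and iL: "i \<le> L" and jL: "j \<le> L"
  shows "qbinom q (N1 + i) j * qbinom q (N2 + j) i
       = (\<Sum>m\<in>{0..L}. q powi ((i - m) * (j - m)) * qbinom q (N1 + N2 + m) m * qbinom q N2 (i - m) * qbinom q N1 (j - m))"
proof -
  let ?T = "{0..L}"
  have "qbinom q (N2 + j) i = qbinom q (N2 + j) (i - 0)" by simp
  also have "\<dots> = (\<Sum>k\<in>?T. q powi ((k - 0) * (N2 - i + k)) * qbinom q N2 (i - k) * qbinom q j (k - 0))"
    by (rule VAs[OF nz q0 N20 j0]) (use iL in auto)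
  finally have s1: "qbinom q (N2 + j) i = (\<Sum>k\<in>?T. q powi (k * (N2 - i + k)) * qbinom q N2 (i - k) * qbinom q j k)" by simp
  have s2: "qbinom q (N1 + i) j * (q powi (k * (N2 - i + k)) * qbinom q N2 (i - k) * qbinom q j k)
     = (\<Sum>m\<in>?T. q powi ((i - m) * (j - m)) * qbinom q N2 (i - m) * qbinom q N1 (j - m) *
             (q powi (k * (N2 - i + k)) * qbinom q (N1 + i) k * qbinom q (N2 - i + m) (m - k)))"
    if kT: "k \<in> ?T" for k
  proof (cases "i < k")
    case True
    have z: "q powi ((i - m) * (j - m)) * qbinom q N2 (i - m) * qbinom q N1 (j - m) *
             (q powi (k * (N2 - i + k)) * qbinom q (N1 + i) k * qbinom q (N2 - i + m) (m - k)) = 0" for m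
      by (cases "m \<le> i") (use True N20 in \<open>simp_all add: qb_neg qb_big\<close>)
    have "(\<Sum>m\<in>?T. q powi ((i - m) * (j - m)) * qbinom q N2 (i - m) * qbinom q N1 (j - m) *
             (q powi (k * (N2 - i + k)) * qbinom q (N1 + i) k * qbinom q (N2 - i + m) (m - k))) = 0"
      by (rule sum.neutral) (use z in blast)
    then show ?thesis using True N20 by (simp add: qb_neg qb_big)
  next
    case False
    have k0: "0 \<le> k" using kT by simp
    have "qbinom q (N1 + i) j * qbinom q j k = qbinom q (N1 + i) k * qbinom q (N1 + i - k) (j - k)"
      by (rule T1[OF nz]) (use N10 i0 in simp)
    also have "qbinom q (N1 + i - k) (j - k) = qbinom q (N1 + (i - k)) (j - k)" by (simp add: algebra_simps)
    also have "\<dots> = (\<Sum>m\<in>?T. q powi ((j - m) * ((i - k) - m + k)) * qbinom q N1 (j - m) * qbinom q (i - k) (m - k))"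
      by (rule VBs[OF nz q0 N10]) (use False k0 jL in auto)
    finally have a: "qbinom q (N1 + i) j * qbinom q j k = qbinom q (N1 + i) k *
         (\<Sum>m\<in>?T. q powi ((i - m) * (j - m)) * qbinom q N1 (j - m) * qbinom q (i - k) (m - k))"
      by (simp add: algebra_simps)
    have b: "qbinom q N2 (i - k) * qbinom q (i - k) (m - k) = qbinom q N2 (i - m) * qbinom q (N2 - i + m) (m - k)" for m
    proof -
      have "qbinom q (i - k) (m - k) = qbinom q (i - k) (i - m)"
        using qb_sym[of "i - k" q "m - k"] False by simp
      moreover have "qbinom q N2 (i - k) * qbinom q (i - k) (i - m) = qbinom q N2 (i - m) * qbinom q (N2 - (i - m)) (i - k - (i - m))"
        by (rule T1[OF nz N20])
      ultimately show ?thesis by (simp add: algebra_simps)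
    qed
    have "qbinom q (N1 + i) j * (q powi (k * (N2 - i + k)) * qbinom q N2 (i - k) * qbinom q j k)
        = q powi (k * (N2 - i + k)) * qbinom q N2 (i - k) * (qbinom q (N1 + i) j * qbinom q j k)"
      by (simp add: algebra_simps)
    also have "\<dots> = (\<Sum>m\<in>?T. q powi (k * (N2 - i + k)) * qbinom q (N1 + i) k * q powi ((i - m) * (j - m)) * qbinom q N1 (j - m)
                    * (qbinom q N2 (i - k) * qbinom q (i - k) (m - k)))"
      unfolding a by (simp add: sum_distrib_left algebra_simps)
    also have "\<dots> = (\<Sum>m\<in>?T. q powi ((i - m) * (j - m)) * qbinom q N2 (i - m) * qbinom q N1 (j - m) *
             (q powi (k * (N2 - i + k)) * qbinom q (N1 + i) k * qbinom q (N2 - i + m) (m - k)))"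
      unfolding b by (simp add: algebra_simps)
    finally show ?thesis .
  qed
  have "qbinom q (N1 + i) j * qbinom q (N2 + j) i
      = (\<Sum>k\<in>?T. \<Sum>m\<in>?T. q powi ((i - m) * (j - m)) * qbinom q N2 (i - m) * qbinom q N1 (j - m) *
             (q powi (k * (N2 - i + k)) * qbinom q (N1 + i) k * qbinom q (N2 - i + m) (m - k)))"
    unfolding s1 sum_distrib_left by (rule sum.cong[OF refl]) (rule s2)
  also have "\<dots> = (\<Sum>m\<in>?T. q powi ((i - m) * (j - m)) * qbinom q N2 (i - m) * qbinom q N1 (j - m) *
             (\<Sum>k\<in>?T. q powi (k * (N2 - i + k)) * qbinom q (N1 + i) k * qbinom q (N2 - i + m) (m - k)))"
    by (subst sum.swap) (simp add: sum_distrib_left)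
  also have "\<dots> = (\<Sum>m\<in>?T. q powi ((i - m) * (j - m)) * qbinom q (N1 + N2 + m) m * qbinom q N2 (i - m) * qbinom q N1 (j - m))"
  proof (rule sum.cong[OF refl])
    fix m assume mT: "m \<in> ?T"
    show "q powi ((i - m) * (j - m)) * qbinom q N2 (i - m) * qbinom q N1 (j - m) *
             (\<Sum>k\<in>?T. q powi (k * (N2 - i + k)) * qbinom q (N1 + i) k * qbinom q (N2 - i + m) (m - k))
        = q powi ((i - m) * (j - m)) * qbinom q (N1 + N2 + m) m * qbinom q N2 (i - m) * qbinom q N1 (j - m)"
    proof (cases "N2 - i + m < 0")
      case True then show ?thesis by (simp add: qb_big)
    next
      case False
      have "(\<Sum>k\<in>?T. q powi (k * (N2 - i + k)) * qbinom q (N1 + i) k * qbinom q (N2 - i + m) (m - k))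
          = (\<Sum>k\<in>?T. q powi (k * ((N2 - i + m) - m + k)) * qbinom q (N2 - i + m) (m - k) * qbinom q (N1 + i) k)"
        by (simp add: algebra_simps)
      also have "\<dots> = qbinom q ((N2 - i + m) + (N1 + i)) m"
        by (rule VA[OF nz q0, symmetric]) (use False N10 i0 mT in auto)
      also have "(N2 - i + m) + (N1 + i) = N1 + N2 + m" by simp
      finally show ?thesis by (simp add: algebra_simps)
    qed
  qed
  finally show ?thesis .
qed



lemma sum_nat_int: "(\<Sum>i\<in>{0..a::nat}. g (int i)) = (\<Sum>x\<in>{0..int a}. g x)"
proof -
  have "(\<Sum>x\<in>{0..int a}. g x) = (\<Sum>x\<in>int ` {0..a}. g x)" by (simp add: image_int_atLeastAtMost)
  also have "\<dots> = (\<Sum>i\<in>{0..a}. g (int i))" by (subst sum.reindex) (auto simp: inj_on_def)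
  finally show ?thesis by simp
qed

theorem proposition5p1:
  fixes q :: "'a::field" and n1 n2 a b n :: nat
  assumes q_nz: "q \<noteq> 0"
    and qint_nz: "\<forall>m\<ge>1. qint q m \<noteq> 0"
    and n_def: "n = n1 + n2"
  shows "(\<Sum>i\<in>{0..a}. \<Sum>j\<in>{0..b}.
            q powi ((int n1 - int a) * int i + (int n2 - int b) * int j - int i * int j
                    + int i ^ 2 + int j ^ 2)
          * qbinom q (int n1) (int a - int i) * qbinom q (int n2) (int b - int j)
          * qbinom q (int n1 + int n2) (int n1 + int i - int j)
          * qbinom q (int n1 + int i) (int n1) * qbinom q (int n2 + int j) (int n2))
       = qbinom q (int n) (int n1) *
         (\<Sum>i\<in>{0..min a b}.
            q powi ((int n - int a - int b) * int i + int i ^ 2)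
          * qbinom q (int n + int i) (int i) * qbinom q (int n) (int a - int i)
          * qbinom q (int n) (int b - int i))"
proof -
  define N1 where "N1 = int n1"
  define N2 where "N2 = int n2"
  define AA where "AA = int a"
  define BB where "BB = int b"
  define Q where "Q = {0..AA + BB}"
  have N10: "0 \<le> N1" and N20: "0 \<le> N2" and A0: "0 \<le> AA" and B0: "0 \<le> BB"
    by (simp_all add: N1_def N2_def AA_def BB_def)
  have fQ: "finite Q" by (simp add: Q_def)
  define E where "E = (\<lambda>i j::int. (N1 - AA) * i + (N2 - BB) * j - i * j + i ^ 2 + j ^ 2)"
  define f where "f = (\<lambda>i j::int. q powi E i j
          * qbinom q N1 (AA - i) * qbinom q N2 (BB - j)
          * qbinom q (N1 + N2) (N1 + i - j)
          * qbinom q (N1 + i) N1 * qbinom q (N2 + j) N2)"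
  define g where "g = (\<lambda>k::int. q powi ((N1 + N2 - AA - BB) * k + k ^ 2)
          * qbinom q (N1 + N2 + k) k * qbinom q (N1 + N2) (AA - k)
          * qbinom q (N1 + N2) (BB - k))"
  define t where "t = (\<lambda>i j k::int. qbinom q (N1 + N2) N1 *
          (q powi ((N1 + N2 - AA - BB) * k + k ^ 2) * qbinom q (N1 + N2 + k) k
           * (q powi ((i - k) * (N1 - AA + i)) * qbinom q N1 (AA - i) * qbinom q N2 (i - k))
           * (q powi ((j - k) * (N2 - BB + j)) * qbinom q N2 (BB - j) * qbinom q N1 (j - k))))"
  have L1: "(\<Sum>i\<in>{0..a}. \<Sum>j\<in>{0..b}.
            q powi ((int n1 - int a) * int i + (int n2 - int b) * int j - int i * int j
                    + int i ^ 2 + int j ^ 2)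
          * qbinom q (int n1) (int a - int i) * qbinom q (int n2) (int b - int j)
          * qbinom q (int n1 + int n2) (int n1 + int i - int j)
          * qbinom q (int n1 + int i) (int n1) * qbinom q (int n2 + int j) (int n2))
        = (\<Sum>i\<in>{0..a}. \<Sum>j\<in>{0..b}. f (int i) (int j))"
    by (simp add: f_def E_def N1_def N2_def AA_def BB_def)
  have R1: "qbinom q (int n) (int n1) *
         (\<Sum>i\<in>{0..min a b}.
            q powi ((int n - int a - int b) * int i + int i ^ 2)
          * qbinom q (int n + int i) (int i) * qbinom q (int n) (int a - int i)
          * qbinom q (int n) (int b - int i)) = qbinom q (N1 + N2) N1 * (\<Sum>i\<in>{0..min a b}. g (int i))"
    by (simp add: g_def N1_def N2_def AA_def BB_def n_def)
  show ?thesis unfolding L1 R1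
  proof -
    have "(\<Sum>i\<in>{0..a}. \<Sum>j\<in>{0..b}. f (int i) (int j))
        = (\<Sum>i\<in>{0..a}. \<Sum>j\<in>{0..BB}. f (int i) j)"
      unfolding BB_def by (rule sum.cong[OF refl], rule sum_nat_int)
  also have "\<dots> = (\<Sum>i\<in>{0..AA}. \<Sum>j\<in>{0..BB}. f i j)"
    unfolding AA_def by (rule sum_nat_int)
  also have "\<dots> = (\<Sum>i\<in>Q. \<Sum>j\<in>Q. f i j)"
  proof -
    have "(\<Sum>i\<in>{0..AA}. \<Sum>j\<in>{0..BB}. f i j) = (\<Sum>i\<in>{0..AA}. \<Sum>j\<in>Q. f i j)"
    proof (rule sum.cong[OF refl], rule sum.mono_neutral_left[OF fQ])
      show "{0..BB} \<subseteq> Q" using A0 by (auto simp: Q_def)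
      show "\<forall>j\<in>Q - {0..BB}. f i j = 0" for i by (auto simp: Q_def f_def qb_neg)
    qed
    also have "\<dots> = (\<Sum>i\<in>Q. \<Sum>j\<in>Q. f i j)"
    proof (rule sum.mono_neutral_left[OF fQ])
      show "{0..AA} \<subseteq> Q" using B0 by (auto simp: Q_def)
      show "\<forall>i\<in>Q - {0..AA}. (\<Sum>j\<in>Q. f i j) = 0" by (auto simp: Q_def f_def qb_neg)
    qed
    finally show ?thesis .
  qed
  also have "\<dots> = (\<Sum>i\<in>Q. \<Sum>j\<in>Q. \<Sum>k\<in>Q. t i j k)"
  proof (intro sum.cong refl)
    fix i j assume iQ: "i \<in> Q" and jQ: "j \<in> Q"
    obtain i' j' where ij: "i = int i'" "j = int j'" using iQ jQ unfolding Q_def by (metis atLeastAtMost_iff nonneg_eq_int)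
    have H: "qbinom q (N1 + N2) (N1 + i - j) * qbinom q (N1 + i) N1 * qbinom q (N2 + j) N2
        = qbinom q (N1 + N2) N1 * qbinom q (N1 + i) j * qbinom q (N2 + j) i"
      unfolding ij N1_def N2_def by (rule Hlem[OF qint_nz])
    have K: "qbinom q (N1 + i) j * qbinom q (N2 + j) i
       = (\<Sum>k\<in>Q. q powi ((i - k) * (j - k)) * qbinom q (N1 + N2 + k) k * qbinom q N2 (i - k) * qbinom q N1 (j - k))"
      unfolding Q_def by (rule coreK[OF qint_nz q_nz N10 N20]) (use iQ jQ in \<open>auto simp: Q_def\<close>)
    have "f i j = q powi E i j * qbinom q N1 (AA - i) * qbinom q N2 (BB - j) * qbinom q (N1 + N2) N1 *
         (qbinom q (N1 + i) j * qbinom q (N2 + j) i)"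
      unfolding f_def using H by (simp add: algebra_simps)
    also have "\<dots> = (\<Sum>k\<in>Q. t i j k)"
      unfolding K sum_distrib_left
    proof (intro sum.cong refl)
      fix k
      have ex: "E i j + (i - k) * (j - k) = ((N1 + N2 - AA - BB) * k + k ^ 2) + (i - k) * (N1 - AA + i) + (j - k) * (N2 - BB + j)"
        by (simp add: E_def algebra_simps power2_eq_square)
      have pw: "q powi E i j * q powi ((i - k) * (j - k)) = q powi ((N1 + N2 - AA - BB) * k + k ^ 2) * q powi ((i - k) * (N1 - AA + i)) * q powi ((j - k) * (N2 - BB + j))"
        by (simp only: power_int_add[symmetric] q_nz ex simp_thms)
      show "q powi E i j * qbinom q N1 (AA - i) * qbinom q N2 (BB - j) * qbinom q (N1 + N2) N1 *
          (q powi ((i - k) * (j - k)) * qbinom q (N1 + N2 + k) k * qbinom q N2 (i - k) * qbinom q N1 (j - k)) = t i j k"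
        unfolding t_def using pw by (simp add: algebra_simps)
    qed
    finally show "f i j = (\<Sum>k\<in>Q. t i j k)" .
  qed
  also have "\<dots> = (\<Sum>i\<in>Q. \<Sum>k\<in>Q. \<Sum>j\<in>Q. t i j k)"
    by (rule sum.cong[OF refl]) (rule sum.swap)
  also have "\<dots> = (\<Sum>k\<in>Q. \<Sum>i\<in>Q. \<Sum>j\<in>Q. t i j k)"
    by (rule sum.swap)
  also have "\<dots> = (\<Sum>k\<in>Q. qbinom q (N1 + N2) N1 * g k)"
  proof (rule sum.cong[OF refl])
    fix k assume kQ: "k \<in> Q"
    have VA1: "qbinom q (N1 + N2) (AA - k) = (\<Sum>i\<in>Q. q powi ((i - k) * (N1 - AA + i)) * qbinom q N1 (AA - i) * qbinom q N2 (i - k))"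
      by (rule VAs[OF qint_nz q_nz N10 N20 fQ]) (use kQ B0 in \<open>auto simp: Q_def\<close>)
    have VA2: "qbinom q (N2 + N1) (BB - k) = (\<Sum>j\<in>Q. q powi ((j - k) * (N2 - BB + j)) * qbinom q N2 (BB - j) * qbinom q N1 (j - k))"
      by (rule VAs[OF qint_nz q_nz N20 N10 fQ]) (use kQ A0 in \<open>auto simp: Q_def\<close>)
    have "qbinom q (N1 + N2) N1 * g k = qbinom q (N1 + N2) N1 * (q powi ((N1 + N2 - AA - BB) * k + k ^ 2)
          * qbinom q (N1 + N2 + k) k) * (qbinom q (N1 + N2) (AA - k) * qbinom q (N2 + N1) (BB - k))"
      by (simp add: g_def algebra_simps)
    also have "\<dots> = qbinom q (N1 + N2) N1 * (q powi ((N1 + N2 - AA - BB) * k + k ^ 2)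
          * qbinom q (N1 + N2 + k) k) * (\<Sum>i\<in>Q. \<Sum>j\<in>Q.
            (q powi ((i - k) * (N1 - AA + i)) * qbinom q N1 (AA - i) * qbinom q N2 (i - k))
          * (q powi ((j - k) * (N2 - BB + j)) * qbinom q N2 (BB - j) * qbinom q N1 (j - k)))"
      by (simp only: VA1 VA2 sum_product)
    also have "\<dots> = (\<Sum>i\<in>Q. \<Sum>j\<in>Q. qbinom q (N1 + N2) N1 * (q powi ((N1 + N2 - AA - BB) * k + k ^ 2)
          * qbinom q (N1 + N2 + k) k) * (
            (q powi ((i - k) * (N1 - AA + i)) * qbinom q N1 (AA - i) * qbinom q N2 (i - k))
          * (q powi ((j - k) * (N2 - BB + j)) * qbinom q N2 (BB - j) * qbinom q N1 (j - k))))"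
      by (simp only: sum_distrib_left)
    also have "\<dots> = (\<Sum>i\<in>Q. \<Sum>j\<in>Q. t i j k)"
      by (intro sum.cong refl) (simp only: t_def mult.assoc)
    finally show "(\<Sum>i\<in>Q. \<Sum>j\<in>Q. t i j k) = qbinom q (N1 + N2) N1 * g k" by simp
  qed
  also have "\<dots> = qbinom q (N1 + N2) N1 * (\<Sum>k\<in>Q. g k)" by (simp add: sum_distrib_left)
  also have "(\<Sum>k\<in>Q. g k) = (\<Sum>k\<in>{0..min AA BB}. g k)"
  proof (rule sum.mono_neutral_right[OF fQ])
    show "{0..min AA BB} \<subseteq> Q" using A0 B0 by (auto simp: Q_def)
    show "\<forall>i\<in>Q - {0..min AA BB}. g i = 0" by (auto simp: Q_def g_def qb_neg)
  qed
  also have "\<dots> = (\<Sum>i\<in>{0..min a b}. g (int i))"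
    unfolding AA_def BB_def by (simp add: sum_nat_int min_def)
  finally show "(\<Sum>i\<in>{0..a}. \<Sum>j\<in>{0..b}. f (int i) (int j)) = qbinom q (N1 + N2) N1 * (\<Sum>i\<in>{0..min a b}. g (int i))" .
  qed
qed

end
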